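(* Let $\Omega$ be an infinite set, $w:\Omega\to\mathbb R^{+}$ a function with strictly positive values, and $I$ a fine ideal of $\mathfrak F=\mathfrak F(\mathcal P_{fin}(\Omega),\mathbb R)$. Let $\mathcal R_I=\mathfrak F/I$ and $J_I:\mathfrak F\to\mathcal R_I$, $J_I(\varphi)=\varphi+I$, the canonical projection. For $A\subseteq\Omega$ and $u:A\to\mathbb R$ put $\sum_{\omega\in A}u(\omega):=J_I\big(\lambda\mapsto\sum_{\omega\in A\cap\lambda}u(\omega)\big)$, and define $$P_I(A)=\frac{\sum_{\omega\in A}w(\omega)}{\sum_{\omega\in\Omega}w(\omega)}.$$ Then $\mathcal R_I$ is a superreal field (with $\mathbb R$ embedded via constant functions), and $(\Omega,P_I,J_I)$ is a NAP-space, i.e. it satisfies (NAP0)–(NAP4).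
   Context: $\mathcal P_{fin}(\Omega)$ denotes the set of finite subsets of $\Omega$, and $\mathfrak F(\mathcal P_{fin}(\Omega),\mathbb R)$ the real algebra of all functions $\mathcal P_{fin}(\Omega)\to\mathbb R$ with pointwise operations. For $\omega\in\Omega$, $\chi_\lambda(\omega)=1$ if $\omega\in\lambda$ and $0$ otherwise. An ideal $I$ of $\mathfrak F$ is fine if it is maximal and, for every $\omega\in\Omega$, $\lambda\mapsto1-\chi_\lambda(\omega)$ belongs to $I$. A superreal field is an ordered field containing $\mathbb R$ as an ordered subfield. The NAP axioms for a triple $(\Omega,P,J)$ with $P:\mathcal P(\Omega)\to\mathcal R$ ($\mathcal R$ a superreal field) and $J:\mathfrak F\to\mathcal R$ an algebra homomorphism are: (NAP0) $P$ is defined on all of $\mathcal P(\Omega)$ with values in the superreal field $\mathcal R$; (NAP1) $P(A)\ge0$; (NAP2) $P(A)=1$ iff $A=\Omega$; (NAP3) $P(A\cup B)=P(A)+P(B)$ when $A\cap B=\varnothing$; (NAP4) with $P(A\mid B)=P(A\cap B)/P(B)$ for $B\ne\varnothing$, $P(A\mid\lambda)\in\mathbb R$ for all nonempty finite $\lambda$ and all $A$, and $P(A)=J(\varphi_A)$ where $\varphi_A(\lambda)=P(A\mid\lambda)$ for nonempty finite $\lambda$ ($\varphi_A(\varnothing)$ arbitrary). *)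

theory Defs
  imports Complex_Main "HOL-Algebra.QuotRing"
begin

definition Pfin :: "'a set \<Rightarrow> 'a set set" where
  "Pfin \<Omega> = {L. finite L \<and> L \<subseteq> \<Omega>}"

text \<open>A function on Pfin(Omega) is represented by a function on all sets that
  vanishes outside Pfin(Omega).\<close>
definition FF :: "'a set \<Rightarrow> ('a set \<Rightarrow> real) ring" where
  "FF \<Omega> = \<lparr> carrier = {f. \<forall>L. L \<notin> Pfin \<Omega> \<longrightarrow> f L = 0},
            mult = (\<lambda>f g L. f L * g L),
            one = (\<lambda>L. if L \<in> Pfin \<Omega> then 1 else 0),
            zero = (\<lambda>L. 0),
            add = (\<lambda>f g L. f L + g L) \<rparr>"

definition onPfin :: "'a set \<Rightarrow> ('a set \<Rightarrow> real) \<Rightarrow> ('a set \<Rightarrow> real)" where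
  "onPfin \<Omega> f = (\<lambda>L. if L \<in> Pfin \<Omega> then f L else 0)"

definition constF :: "'a set \<Rightarrow> real \<Rightarrow> ('a set \<Rightarrow> real)" where
  "constF \<Omega> r = onPfin \<Omega> (\<lambda>_. r)"

definition scaleF :: "real \<Rightarrow> ('a set \<Rightarrow> real) \<Rightarrow> ('a set \<Rightarrow> real)" where
  "scaleF r f = (\<lambda>L. r * f L)"

definition chi :: "'a set \<Rightarrow> 'a \<Rightarrow> real" where
  "chi L \<omega> = (if \<omega> \<in> L then 1 else 0)"

definition fine_ideal :: "'a set \<Rightarrow> ('a set \<Rightarrow> real) set \<Rightarrow> bool" where
  "fine_ideal \<Omega> I \<longleftrightarrow> maximalideal I (FF \<Omega>) \<and>
     (\<forall>\<omega>\<in>\<Omega>. onPfin \<Omega> (\<lambda>L. 1 - chi L \<omega>) \<in> I)"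

definition RI :: "'a set \<Rightarrow> ('a set \<Rightarrow> real) set \<Rightarrow> ('a set \<Rightarrow> real) set ring" where
  "RI \<Omega> I = FF \<Omega> Quot I"

definition JI :: "'a set \<Rightarrow> ('a set \<Rightarrow> real) set \<Rightarrow> ('a set \<Rightarrow> real) \<Rightarrow> ('a set \<Rightarrow> real) set" where
  "JI \<Omega> I \<phi> = I +>\<^bsub>FF \<Omega>\<^esub> \<phi>"

definition RI_le :: "('a set \<Rightarrow> real) set \<Rightarrow> ('a set \<Rightarrow> real) set \<Rightarrow> bool" where
  "RI_le X Y \<longleftrightarrow> (\<exists>\<phi>\<in>X. \<exists>\<psi>\<in>Y. \<forall>L. \<phi> L \<le> \<psi> L)"

definition embI :: "'a set \<Rightarrow> ('a set \<Rightarrow> real) set \<Rightarrow> real \<Rightarrow> ('a set \<Rightarrow> real) set" where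
  "embI \<Omega> I r = JI \<Omega> I (constF \<Omega> r)"

definition sumI :: "'a set \<Rightarrow> ('a set \<Rightarrow> real) set \<Rightarrow> 'a set \<Rightarrow> ('a \<Rightarrow> real) \<Rightarrow> ('a set \<Rightarrow> real) set" where
  "sumI \<Omega> I A u = JI \<Omega> I (onPfin \<Omega> (\<lambda>L. \<Sum>\<omega>\<in>A \<inter> L. u \<omega>))"

definition PI :: "'a set \<Rightarrow> ('a set \<Rightarrow> real) set \<Rightarrow> ('a \<Rightarrow> real) \<Rightarrow> 'a set \<Rightarrow> ('a set \<Rightarrow> real) set" where
  "PI \<Omega> I w A = sumI \<Omega> I A w \<otimes>\<^bsub>RI \<Omega> I\<^esub> inv\<^bsub>RI \<Omega> I\<^esub> (sumI \<Omega> I \<Omega> w)"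

definition superreal_field :: "('b, 'c) ring_scheme \<Rightarrow> ('b \<Rightarrow> 'b \<Rightarrow> bool) \<Rightarrow> (real \<Rightarrow> 'b) \<Rightarrow> bool" where
  "superreal_field Q leq emb \<longleftrightarrow>
     field Q \<and>
     (\<forall>x\<in>carrier Q. leq x x) \<and>
     (\<forall>x\<in>carrier Q. \<forall>y\<in>carrier Q. leq x y \<and> leq y x \<longrightarrow> x = y) \<and>
     (\<forall>x\<in>carrier Q. \<forall>y\<in>carrier Q. \<forall>z\<in>carrier Q. leq x y \<and> leq y z \<longrightarrow> leq x z) \<and>
     (\<forall>x\<in>carrier Q. \<forall>y\<in>carrier Q. leq x y \<or> leq y x) \<and>
     (\<forall>x\<in>carrier Q. \<forall>y\<in>carrier Q. \<forall>z\<in>carrier Q. leq x y \<longrightarrow> leq (x \<oplus>\<^bsub>Q\<^esub> z) (y \<oplus>\<^bsub>Q\<^esub> z)) \<and>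
     (\<forall>x\<in>carrier Q. \<forall>y\<in>carrier Q. leq \<zero>\<^bsub>Q\<^esub> x \<and> leq \<zero>\<^bsub>Q\<^esub> y \<longrightarrow> leq \<zero>\<^bsub>Q\<^esub> (x \<otimes>\<^bsub>Q\<^esub> y)) \<and>
     (\<forall>r. emb r \<in> carrier Q) \<and>
     (\<forall>r s. emb (r + s) = emb r \<oplus>\<^bsub>Q\<^esub> emb s) \<and>
     (\<forall>r s. emb (r * s) = emb r \<otimes>\<^bsub>Q\<^esub> emb s) \<and>
     emb 1 = \<one>\<^bsub>Q\<^esub> \<and>
     inj emb \<and>
     (\<forall>r s. r \<le> s \<longleftrightarrow> leq (emb r) (emb s))"

definition NAP_space ::
  "'a set \<Rightarrow> ('b, 'c) ring_scheme \<Rightarrow> ('b \<Rightarrow> 'b \<Rightarrow> bool) \<Rightarrow> (real \<Rightarrow> 'b)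
     \<Rightarrow> ('a set \<Rightarrow> 'b) \<Rightarrow> (('a set \<Rightarrow> real) \<Rightarrow> 'b) \<Rightarrow> bool" where
  "NAP_space \<Omega> Q leq emb P J \<longleftrightarrow>
     \<comment> \<open>J is an algebra homomorphism\<close>
     J \<in> ring_hom (FF \<Omega>) Q \<and>
     (\<forall>r. \<forall>\<phi>\<in>carrier (FF \<Omega>). J (scaleF r \<phi>) = emb r \<otimes>\<^bsub>Q\<^esub> J \<phi>) \<and>
     \<comment> \<open>NAP0\<close>
     superreal_field Q leq emb \<and> (\<forall>A. A \<subseteq> \<Omega> \<longrightarrow> P A \<in> carrier Q) \<and>
     \<comment> \<open>NAP1\<close>
     (\<forall>A. A \<subseteq> \<Omega> \<longrightarrow> leq \<zero>\<^bsub>Q\<^esub> (P A)) \<and>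
     \<comment> \<open>NAP2\<close>
     (\<forall>A. A \<subseteq> \<Omega> \<longrightarrow> (P A = \<one>\<^bsub>Q\<^esub> \<longleftrightarrow> A = \<Omega>)) \<and>
     \<comment> \<open>NAP3\<close>
     (\<forall>A B. A \<subseteq> \<Omega> \<longrightarrow> B \<subseteq> \<Omega> \<longrightarrow> A \<inter> B = {} \<longrightarrow> P (A \<union> B) = P A \<oplus>\<^bsub>Q\<^esub> P B) \<and>
     \<comment> \<open>NAP4: conditional probabilities w.r.t. finite sets are real, and P(A) = J(phi_A)\<close>
     (\<forall>A L. A \<subseteq> \<Omega> \<longrightarrow> L \<in> Pfin \<Omega> \<longrightarrow> L \<noteq> {} \<longrightarrow>
         (\<exists>r. emb r = P (A \<inter> L) \<otimes>\<^bsub>Q\<^esub> inv\<^bsub>Q\<^esub> (P L))) \<and>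
     (\<forall>A. A \<subseteq> \<Omega> \<longrightarrow> (\<forall>\<phi>\<in>carrier (FF \<Omega>).
         (\<forall>L\<in>Pfin \<Omega>. L \<noteq> {} \<longrightarrow> emb (\<phi> L) = P (A \<inter> L) \<otimes>\<^bsub>Q\<^esub> inv\<^bsub>Q\<^esub> (P L))
         \<longrightarrow> P A = J \<phi>))"

end

theory Submission
  imports Defs
begin


lemma carrier_FF: "f \<in> carrier (FF \<Omega>) \<longleftrightarrow> (\<forall>L. L \<notin> Pfin \<Omega> \<longrightarrow> f L = 0)"
  by (simp add: FF_def)
lemma FF_ops: "x \<otimes>\<^bsub>FF \<Omega>\<^esub> y = (\<lambda>L. x L * y L)" "x \<oplus>\<^bsub>FF \<Omega>\<^esub> y = (\<lambda>L. x L + y L)"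
   "\<one>\<^bsub>FF \<Omega>\<^esub> = onPfin \<Omega> (\<lambda>_. 1)" "\<zero>\<^bsub>FF \<Omega>\<^esub> = (\<lambda>L. 0)"
  by (simp_all add: FF_def onPfin_def)

lemma cring_FF: "cring (FF \<Omega>)"
proof (rule cringI)
  show "abelian_group (FF \<Omega>)"
    apply (rule abelian_groupI)
    apply (auto simp: FF_def fun_eq_iff algebra_simps)
    apply (rule_tac x="\<lambda>L. - x L" in exI, auto)
    done
  show "comm_monoid (FF \<Omega>)"
    by (rule comm_monoidI) (auto simp: FF_def fun_eq_iff algebra_simps)
qed (auto simp: FF_def fun_eq_iff algebra_simps)

lemma a_coset_FF: "I +>\<^bsub>FF \<Omega>\<^esub> f = (\<Union>h\<in>I. {(\<lambda>L. h L + f L)})"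
  unfolding a_r_coset_def' by (simp add: FF_ops)

locale fineL =
  fixes \<Omega> :: "'a set" and I :: "('a set \<Rightarrow> real) set"
  assumes fine: "fine_ideal \<Omega> I"
begin

lemma maxI: "maximalideal I (FF \<Omega>)" using fine by (simp add: fine_ideal_def)
lemma idI: "ideal I (FF \<Omega>)" by (rule maximalideal.axioms(1)[OF maxI])
lemma primeI: "primeideal I (FF \<Omega>)" using cring.maximalideal_prime[OF cring_FF maxI] .

lemma I_carr: "f \<in> I \<Longrightarrow> f \<in> carrier (FF \<Omega>)"
  by (rule additive_subgroup.a_Hcarr[OF ideal.axioms(1)[OF idI]])
lemma I_zero: "(\<lambda>L. 0) \<in> I"
  using additive_subgroup.zero_closed[OF ideal.axioms(1)[OF idI]] by (simp add: FF_ops)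
lemma I_add: "f \<in> I \<Longrightarrow> g \<in> I \<Longrightarrow> (\<lambda>L. f L + g L) \<in> I"
  using additive_subgroup.a_closed[OF ideal.axioms(1)[OF idI]] by (simp add: FF_ops)
lemma I_mult: "f \<in> I \<Longrightarrow> g \<in> carrier (FF \<Omega>) \<Longrightarrow> (\<lambda>L. g L * f L) \<in> I"
  using ideal.I_l_closed[OF idI] by (simp add: FF_ops)
lemma I_neg: "f \<in> I \<Longrightarrow> (\<lambda>L. - f L) \<in> I"
proof -
  assume f: "f \<in> I"
  have "(\<lambda>L. onPfin \<Omega> (\<lambda>_. -1) L * f L) \<in> I"
    by (rule I_mult[OF f]) (simp add: carrier_FF onPfin_def)
  moreover have "(\<lambda>L. onPfin \<Omega> (\<lambda>_. -1) L * f L) = (\<lambda>L. - f L)"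
    using I_carr[OF f] by (auto simp: fun_eq_iff onPfin_def carrier_FF)
  ultimately show ?thesis by simp
qed
lemma one_notin: "onPfin \<Omega> (\<lambda>_. 1) \<notin> I"
proof
  assume "onPfin \<Omega> (\<lambda>_. 1) \<in> I"
  hence "\<one>\<^bsub>FF \<Omega>\<^esub> \<in> I" by (simp add: FF_ops)
  hence "I = carrier (FF \<Omega>)" using ideal.one_imp_carrier[OF idI] by blast
  thus False using maximalideal.I_notcarr[OF maxI] by simp
qed

definition big :: "'a set set \<Rightarrow> bool" where
  "big S \<longleftrightarrow> onPfin \<Omega> (\<lambda>L. if L \<in> S then 0 else 1) \<in> I"

lemma big_mono: "big S \<Longrightarrow> S \<inter> Pfin \<Omega> \<subseteq> T \<Longrightarrow> big T"
proof -
  assume S: "big S" and ST: "S \<inter> Pfin \<Omega> \<subseteq> T"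
  have "(\<lambda>L. onPfin \<Omega> (\<lambda>L. if L \<in> T then 0 else 1) L * onPfin \<Omega> (\<lambda>L. if L \<in> S then 0 else 1) L) \<in> I"
    using S unfolding big_def by (rule I_mult) (simp add: carrier_FF onPfin_def)
  moreover have "(\<lambda>L. onPfin \<Omega> (\<lambda>L. if L \<in> T then 0 else 1) L * onPfin \<Omega> (\<lambda>L. if L \<in> S then 0 else 1) L)
     = onPfin \<Omega> (\<lambda>L. if L \<in> T then 0 else 1)"
    using ST by (auto simp: fun_eq_iff onPfin_def)
  ultimately show ?thesis by (simp add: big_def)
qed

lemma big_Int: "big S \<Longrightarrow> big T \<Longrightarrow> big (S \<inter> T)"
proof -
  assume S: "big S" and T: "big T"
  have "(\<lambda>L. onPfin \<Omega> (\<lambda>L. if L \<in> S then 1 else 0) L * onPfin \<Omega> (\<lambda>L. if L \<in> T then 0 else 1) L) \<in> I"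
    using T unfolding big_def by (rule I_mult) (simp add: carrier_FF onPfin_def)
  with S have "(\<lambda>L. onPfin \<Omega> (\<lambda>L. if L \<in> S then 0 else 1) L + 
     onPfin \<Omega> (\<lambda>L. if L \<in> S then 1 else 0) L * onPfin \<Omega> (\<lambda>L. if L \<in> T then 0 else 1) L) \<in> I"
    unfolding big_def by (rule I_add)
  moreover have "(\<lambda>L. onPfin \<Omega> (\<lambda>L. if L \<in> S then 0 else 1) L + 
     onPfin \<Omega> (\<lambda>L. if L \<in> S then 1 else 0) L * onPfin \<Omega> (\<lambda>L. if L \<in> T then 0 else 1) L)
     = onPfin \<Omega> (\<lambda>L. if L \<in> S \<inter> T then 0 else 1)"
    by (auto simp: fun_eq_iff onPfin_def)
  ultimately show ?thesis by (simp add: big_def)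
qed

lemma big_UNIV: "big UNIV"
  using I_zero by (simp add: big_def onPfin_def)

lemma not_big: "S \<inter> Pfin \<Omega> = {} \<Longrightarrow> \<not> big S"
proof
  assume "S \<inter> Pfin \<Omega> = {}" "big S"
  moreover have "S \<inter> Pfin \<Omega> = {} \<Longrightarrow> onPfin \<Omega> (\<lambda>L. if L \<in> S then 0 else 1) = onPfin \<Omega> (\<lambda>_. 1)"
    by (auto simp: fun_eq_iff onPfin_def)
  ultimately show False using one_notin by (simp add: big_def)
qed

lemma big_compl: "big S \<or> big (- S)"
proof -
  have "onPfin \<Omega> (\<lambda>L. if L \<in> S then 0 else 1) \<otimes>\<^bsub>FF \<Omega>\<^esub> onPfin \<Omega> (\<lambda>L. if L \<in> -S then 0 else 1) = \<zero>\<^bsub>FF \<Omega>\<^esub>"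
    by (auto simp: FF_ops fun_eq_iff onPfin_def)
  moreover have "\<zero>\<^bsub>FF \<Omega>\<^esub> \<in> I" using I_zero by (simp add: FF_ops)
  ultimately show ?thesis using primeideal.I_prime[OF primeI, of "onPfin \<Omega> (\<lambda>L. if L \<in> S then 0 else 1)"
     "onPfin \<Omega> (\<lambda>L. if L \<in> -S then 0 else 1)"]
    by (auto simp: big_def carrier_FF onPfin_def)
qed

lemma zero_iff: assumes f: "f \<in> carrier (FF \<Omega>)" shows "f \<in> I \<longleftrightarrow> big {L. f L = 0}"
proof
  assume B: "big {L. f L = 0}"
  have "(\<lambda>L. f L * onPfin \<Omega> (\<lambda>L. if L \<in> {L. f L = 0} then 0 else 1) L) \<in> I"
    using B unfolding big_def using f by (rule I_mult)
  moreover have "(\<lambda>L. f L * onPfin \<Omega> (\<lambda>L. if L \<in> {L. f L = 0} then 0 else 1) L) = f"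
    using f by (auto simp: fun_eq_iff onPfin_def carrier_FF)
  ultimately show "f \<in> I" by simp
next
  assume fI: "f \<in> I"
  show "big {L. f L = 0}"
  proof (rule ccontr)
    assume "\<not> big {L. f L = 0}"
    hence B: "big (- {L. f L = 0})" using big_compl by blast
    define e where "e = onPfin \<Omega> (\<lambda>L. if L \<in> - {L. f L = 0} then 0 else 1)"
    have eI: "e \<in> I" using B by (simp add: big_def e_def)
    define h where "h = (\<lambda>L. f L * f L + e L)"
    have hI: "h \<in> I" unfolding h_def by (rule I_add[OF I_mult[OF fI f] eI])
    have hpos: "L \<in> Pfin \<Omega> \<Longrightarrow> h L > 0" for L
      by (cases "f L = 0") (auto simp: h_def e_def onPfin_def zero_less_mult_iff)
    define g where "g = onPfin \<Omega> (\<lambda>L. 1 / h L)"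
    have "(\<lambda>L. g L * h L) \<in> I" by (rule I_mult[OF hI]) (simp add: g_def carrier_FF onPfin_def)
    moreover have "(\<lambda>L. g L * h L) = onPfin \<Omega> (\<lambda>_. 1)"
      by (auto simp: fun_eq_iff g_def onPfin_def) (metis hpos less_irrefl)
    ultimately show False using one_notin by simp
  qed
qed

lemma mem_coset: assumes f: "f \<in> carrier (FF \<Omega>)"
  shows "\<phi> \<in> I +>\<^bsub>FF \<Omega>\<^esub> f \<longleftrightarrow> \<phi> \<in> carrier (FF \<Omega>) \<and> (\<lambda>L. \<phi> L - f L) \<in> I"
proof
  assume "\<phi> \<in> I +>\<^bsub>FF \<Omega>\<^esub> f"
  then obtain h where h: "h \<in> I" "\<phi> = (\<lambda>L. h L + f L)" by (auto simp: a_coset_FF)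
  moreover have "(\<lambda>L. \<phi> L - f L) = h" using h by auto
  ultimately show "\<phi> \<in> carrier (FF \<Omega>) \<and> (\<lambda>L. \<phi> L - f L) \<in> I"
    using I_carr[OF h(1)] f by (auto simp: carrier_FF)
next
  assume "\<phi> \<in> carrier (FF \<Omega>) \<and> (\<lambda>L. \<phi> L - f L) \<in> I"
  moreover have "\<phi> = (\<lambda>L. (\<phi> L - f L) + f L)" by auto
  ultimately show "\<phi> \<in> I +>\<^bsub>FF \<Omega>\<^esub> f" unfolding a_coset_FF by blast
qed

lemma coset_eq: assumes f: "f \<in> carrier (FF \<Omega>)" and g: "g \<in> carrier (FF \<Omega>)"
  shows "I +>\<^bsub>FF \<Omega>\<^esub> f = I +>\<^bsub>FF \<Omega>\<^esub> g \<longleftrightarrow> big {L. f L = g L}"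
proof -
  have dc: "(\<lambda>L. f L - g L) \<in> carrier (FF \<Omega>)" using f g by (simp add: carrier_FF)
  have "I +>\<^bsub>FF \<Omega>\<^esub> f = I +>\<^bsub>FF \<Omega>\<^esub> g \<longleftrightarrow> (\<lambda>L. f L - g L) \<in> I"
  proof
    assume E: "I +>\<^bsub>FF \<Omega>\<^esub> f = I +>\<^bsub>FF \<Omega>\<^esub> g"
    have "f \<in> I +>\<^bsub>FF \<Omega>\<^esub> f" using mem_coset[OF f, of f] f I_zero by simp
    thus "(\<lambda>L. f L - g L) \<in> I" using E mem_coset[OF g, of f] by simp
  next
    assume D: "(\<lambda>L. f L - g L) \<in> I"
    have D': "(\<lambda>L. g L - f L) \<in> I" using I_neg[OF D] by simp
    have "\<phi> \<in> I +>\<^bsub>FF \<Omega>\<^esub> f \<longleftrightarrow> \<phi> \<in> I +>\<^bsub>FF \<Omega>\<^esub> g" for \<phi>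
    proof -
      have 1: "(\<lambda>L. \<phi> L - g L) \<in> I" if "(\<lambda>L. \<phi> L - f L) \<in> I"
        using I_add[OF that D] by simp
      have 2: "(\<lambda>L. \<phi> L - f L) \<in> I" if "(\<lambda>L. \<phi> L - g L) \<in> I"
        using I_add[OF that D'] by simp
      show ?thesis
        using mem_coset[OF f] mem_coset[OF g] 1 2 by metis
    qed
    thus "I +>\<^bsub>FF \<Omega>\<^esub> f = I +>\<^bsub>FF \<Omega>\<^esub> g" by (simp add: set_eq_iff)
  qed
  also have "\<dots> \<longleftrightarrow> big {L. f L = g L}" using zero_iff[OF dc] by simp
  finally show ?thesis .
qed

lemma le_iff: assumes f: "f \<in> carrier (FF \<Omega>)" and g: "g \<in> carrier (FF \<Omega>)"
  shows "RI_le (I +>\<^bsub>FF \<Omega>\<^esub> f) (I +>\<^bsub>FF \<Omega>\<^esub> g) \<longleftrightarrow> big {L. f L \<le> g L}"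
proof
  assume "RI_le (I +>\<^bsub>FF \<Omega>\<^esub> f) (I +>\<^bsub>FF \<Omega>\<^esub> g)"
  then obtain \<phi> \<psi> where p: "\<phi> \<in> I +>\<^bsub>FF \<Omega>\<^esub> f" "\<psi> \<in> I +>\<^bsub>FF \<Omega>\<^esub> g" "\<forall>L. \<phi> L \<le> \<psi> L"
    unfolding RI_le_def by blast
  have c1: "(\<lambda>L. \<phi> L - f L) \<in> carrier (FF \<Omega>)" "(\<lambda>L. \<psi> L - g L) \<in> carrier (FF \<Omega>)"
    using p(1,2) mem_coset[OF f] mem_coset[OF g] f g by (auto simp: carrier_FF)
  have "(\<lambda>L. \<phi> L - f L) \<in> I" using p(1) mem_coset[OF f] by simp
  hence "big {L. \<phi> L - f L = 0}" using zero_iff[OF c1(1)] by simp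
  moreover have "(\<lambda>L. \<psi> L - g L) \<in> I" using p(2) mem_coset[OF g] by simp
  hence "big {L. \<psi> L - g L = 0}" using zero_iff[OF c1(2)] by simp
  ultimately have "big ({L. \<phi> L - f L = 0} \<inter> {L. \<psi> L - g L = 0})" by (rule big_Int)
  thus "big {L. f L \<le> g L}" by (rule big_mono, clarsimp) (smt (verit) p(3))
next
  assume B: "big {L. f L \<le> g L}"
  define \<phi> where "\<phi> = (\<lambda>L. min (f L) (g L))"
  have pc: "\<phi> \<in> carrier (FF \<Omega>)" using f g by (simp add: carrier_FF \<phi>_def)
  have "big {L. (\<lambda>L. \<phi> L - f L) L = 0}" by (rule big_mono[OF B]) (auto simp: \<phi>_def)
  hence "(\<lambda>L. \<phi> L - f L) \<in> I" using zero_iff pc f by (simp add: carrier_FF)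
  hence "\<phi> \<in> I +>\<^bsub>FF \<Omega>\<^esub> f" using mem_coset[OF f] pc by simp
  moreover have "g \<in> I +>\<^bsub>FF \<Omega>\<^esub> g" using mem_coset[OF g, of g] g I_zero by simp
  ultimately show "RI_le (I +>\<^bsub>FF \<Omega>\<^esub> f) (I +>\<^bsub>FF \<Omega>\<^esub> g)"
    unfolding RI_le_def by (intro bexI[of _ \<phi>] bexI[of _ g]) (auto simp: \<phi>_def)
qed


lemma carrier_Q: "X \<in> carrier (RI \<Omega> I) \<longleftrightarrow> (\<exists>f. f \<in> carrier (FF \<Omega>) \<and> X = I +>\<^bsub>FF \<Omega>\<^esub> f)"
  unfolding RI_def FactRing_def A_RCOSETS_def' by auto

lemma carrier_QE: assumes "X \<in> carrier (RI \<Omega> I)"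
  obtains f where "f \<in> carrier (FF \<Omega>)" "X = I +>\<^bsub>FF \<Omega>\<^esub> f"
  using assms carrier_Q by blast

lemma add_Q: "f \<in> carrier (FF \<Omega>) \<Longrightarrow> g \<in> carrier (FF \<Omega>) \<Longrightarrow>
   (I +>\<^bsub>FF \<Omega>\<^esub> f) \<oplus>\<^bsub>RI \<Omega> I\<^esub> (I +>\<^bsub>FF \<Omega>\<^esub> g) = I +>\<^bsub>FF \<Omega>\<^esub> (\<lambda>L. f L + g L)"
  using ideal.a_rcos_sum[OF idI, of f g] by (simp add: RI_def FactRing_def FF_ops)

lemma mult_Q: "f \<in> carrier (FF \<Omega>) \<Longrightarrow> g \<in> carrier (FF \<Omega>) \<Longrightarrow>
   (I +>\<^bsub>FF \<Omega>\<^esub> f) \<otimes>\<^bsub>RI \<Omega> I\<^esub> (I +>\<^bsub>FF \<Omega>\<^esub> g) = I +>\<^bsub>FF \<Omega>\<^esub> (\<lambda>L. f L * g L)"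
  using ideal.rcoset_mult_add[OF idI, of f g] by (simp add: RI_def FactRing_def FF_ops)

lemma zero_Q: "\<zero>\<^bsub>RI \<Omega> I\<^esub> = I +>\<^bsub>FF \<Omega>\<^esub> (\<lambda>L. 0)"
proof -
  have "\<phi> \<in> I \<longleftrightarrow> \<phi> \<in> I +>\<^bsub>FF \<Omega>\<^esub> (\<lambda>L. 0)" for \<phi>
    using mem_coset[of "\<lambda>L. 0" \<phi>] I_carr by (auto simp: carrier_FF)
  thus ?thesis by (simp add: RI_def FactRing_def set_eq_iff)
qed

lemma one_Q: "\<one>\<^bsub>RI \<Omega> I\<^esub> = I +>\<^bsub>FF \<Omega>\<^esub> onPfin \<Omega> (\<lambda>_. 1)"
  by (simp add: RI_def FactRing_def FF_ops)

lemma field_Q: "field (RI \<Omega> I)"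
  unfolding RI_def by (rule maximalideal.quotient_is_field[OF maxI cring_FF])

lemma constF_carr: "constF \<Omega> r \<in> carrier (FF \<Omega>)"
  by (simp add: constF_def onPfin_def carrier_FF)

lemma emb_eq: "embI \<Omega> I r = I +>\<^bsub>FF \<Omega>\<^esub> constF \<Omega> r"
  by (simp add: embI_def JI_def)

lemma in_Q: "f \<in> carrier (FF \<Omega>) \<Longrightarrow> I +>\<^bsub>FF \<Omega>\<^esub> f \<in> carrier (RI \<Omega> I)"
  using carrier_Q by blast

lemma superreal: "superreal_field (RI \<Omega> I) RI_le (embI \<Omega> I)"
  unfolding superreal_field_def
proof (intro conjI ballI allI impI)
  show "field (RI \<Omega> I)" by (rule field_Q)
next
  fix x assume "x \<in> carrier (RI \<Omega> I)"
  then obtain f where f: "f \<in> carrier (FF \<Omega>)" "x = I +>\<^bsub>FF \<Omega>\<^esub> f" by (rule carrier_QE)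
  show "RI_le x x" using le_iff[OF f(1) f(1)] big_UNIV by (simp add: f(2))
next
  fix x y assume "x \<in> carrier (RI \<Omega> I)" "y \<in> carrier (RI \<Omega> I)" "RI_le x y \<and> RI_le y x"
  moreover obtain f where f: "f \<in> carrier (FF \<Omega>)" "x = I +>\<^bsub>FF \<Omega>\<^esub> f" by (rule carrier_QE[OF \<open>x \<in> carrier (RI \<Omega> I)\<close>])
  moreover obtain g where g: "g \<in> carrier (FF \<Omega>)" "y = I +>\<^bsub>FF \<Omega>\<^esub> g" by (rule carrier_QE[OF \<open>y \<in> carrier (RI \<Omega> I)\<close>])
  ultimately have "big ({L. f L \<le> g L} \<inter> {L. g L \<le> f L})" using le_iff by (simp add: big_Int)
  hence "big {L. f L = g L}" by (rule big_mono) auto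
  thus "x = y" using coset_eq f g by simp
next
  fix x y z assume "x \<in> carrier (RI \<Omega> I)" "y \<in> carrier (RI \<Omega> I)" "z \<in> carrier (RI \<Omega> I)" "RI_le x y \<and> RI_le y z"
  moreover obtain f where f: "f \<in> carrier (FF \<Omega>)" "x = I +>\<^bsub>FF \<Omega>\<^esub> f" by (rule carrier_QE[OF \<open>x \<in> carrier (RI \<Omega> I)\<close>])
  moreover obtain g where g: "g \<in> carrier (FF \<Omega>)" "y = I +>\<^bsub>FF \<Omega>\<^esub> g" by (rule carrier_QE[OF \<open>y \<in> carrier (RI \<Omega> I)\<close>])
  moreover obtain h where h: "h \<in> carrier (FF \<Omega>)" "z = I +>\<^bsub>FF \<Omega>\<^esub> h" by (rule carrier_QE[OF \<open>z \<in> carrier (RI \<Omega> I)\<close>])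
  ultimately have "big ({L. f L \<le> g L} \<inter> {L. g L \<le> h L})" using le_iff by (simp add: big_Int)
  hence "big {L. f L \<le> h L}" by (rule big_mono) auto
  thus "RI_le x z" using le_iff f h by simp
next
  fix x y assume "x \<in> carrier (RI \<Omega> I)" "y \<in> carrier (RI \<Omega> I)"
  moreover obtain f where f: "f \<in> carrier (FF \<Omega>)" "x = I +>\<^bsub>FF \<Omega>\<^esub> f" by (rule carrier_QE[OF \<open>x \<in> carrier (RI \<Omega> I)\<close>])
  moreover obtain g where g: "g \<in> carrier (FF \<Omega>)" "y = I +>\<^bsub>FF \<Omega>\<^esub> g" by (rule carrier_QE[OF \<open>y \<in> carrier (RI \<Omega> I)\<close>])
  have "big {L. f L \<le> g L} \<or> big (- {L. f L \<le> g L})" by (rule big_compl)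
  moreover have "big (- {L. f L \<le> g L}) \<Longrightarrow> big {L. g L \<le> f L}" by (erule big_mono) auto
  ultimately show "RI_le x y \<or> RI_le y x" using le_iff f g by auto
next
  fix x y z assume "x \<in> carrier (RI \<Omega> I)" "y \<in> carrier (RI \<Omega> I)" "z \<in> carrier (RI \<Omega> I)" "RI_le x y"
  moreover obtain f where f: "f \<in> carrier (FF \<Omega>)" "x = I +>\<^bsub>FF \<Omega>\<^esub> f" by (rule carrier_QE[OF \<open>x \<in> carrier (RI \<Omega> I)\<close>])
  moreover obtain g where g: "g \<in> carrier (FF \<Omega>)" "y = I +>\<^bsub>FF \<Omega>\<^esub> g" by (rule carrier_QE[OF \<open>y \<in> carrier (RI \<Omega> I)\<close>])
  moreover obtain h where h: "h \<in> carrier (FF \<Omega>)" "z = I +>\<^bsub>FF \<Omega>\<^esub> h" by (rule carrier_QE[OF \<open>z \<in> carrier (RI \<Omega> I)\<close>])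
  ultimately have B: "big {L. f L \<le> g L}" using le_iff by simp
  have "big {L. f L + h L \<le> g L + h L}" by (rule big_mono[OF B]) auto
  moreover have "(\<lambda>L. f L + h L) \<in> carrier (FF \<Omega>)" "(\<lambda>L. g L + h L) \<in> carrier (FF \<Omega>)"
    using f g h by (auto simp: carrier_FF)
  ultimately show "RI_le (x \<oplus>\<^bsub>RI \<Omega> I\<^esub> z) (y \<oplus>\<^bsub>RI \<Omega> I\<^esub> z)"
    using le_iff f g h add_Q by simp
next
  fix x y assume "x \<in> carrier (RI \<Omega> I)" "y \<in> carrier (RI \<Omega> I)"
    "RI_le \<zero>\<^bsub>RI \<Omega> I\<^esub> x \<and> RI_le \<zero>\<^bsub>RI \<Omega> I\<^esub> y"
  moreover obtain f where f: "f \<in> carrier (FF \<Omega>)" "x = I +>\<^bsub>FF \<Omega>\<^esub> f" by (rule carrier_QE[OF \<open>x \<in> carrier (RI \<Omega> I)\<close>])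
  moreover obtain g where g: "g \<in> carrier (FF \<Omega>)" "y = I +>\<^bsub>FF \<Omega>\<^esub> g" by (rule carrier_QE[OF \<open>y \<in> carrier (RI \<Omega> I)\<close>])
  moreover have z: "(\<lambda>L. 0::real) \<in> carrier (FF \<Omega>)" by (simp add: carrier_FF)
  ultimately have "big ({L. 0 \<le> f L} \<inter> {L. 0 \<le> g L})" using le_iff zero_Q by (simp add: big_Int)
  hence "big {L. 0 \<le> f L * g L}" by (rule big_mono) auto
  moreover have "(\<lambda>L. f L * g L) \<in> carrier (FF \<Omega>)" using f g by (auto simp: carrier_FF)
  ultimately show "RI_le \<zero>\<^bsub>RI \<Omega> I\<^esub> (x \<otimes>\<^bsub>RI \<Omega> I\<^esub> y)"
    using le_iff[OF z] f g mult_Q zero_Q by simp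
next
  fix r show "embI \<Omega> I r \<in> carrier (RI \<Omega> I)" by (simp add: emb_eq in_Q constF_carr)
next
  fix r s show "embI \<Omega> I (r + s) = embI \<Omega> I r \<oplus>\<^bsub>RI \<Omega> I\<^esub> embI \<Omega> I s"
    by (simp add: emb_eq add_Q constF_carr, rule arg_cong[where f="a_r_coset (FF \<Omega>) I"]) (auto simp: constF_def onPfin_def)
next
  fix r s show "embI \<Omega> I (r * s) = embI \<Omega> I r \<otimes>\<^bsub>RI \<Omega> I\<^esub> embI \<Omega> I s"
    by (simp add: emb_eq mult_Q constF_carr, rule arg_cong[where f="a_r_coset (FF \<Omega>) I"]) (auto simp: constF_def onPfin_def)
next
  show "embI \<Omega> I 1 = \<one>\<^bsub>RI \<Omega> I\<^esub>" by (simp add: emb_eq one_Q constF_def)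
next
  show "inj (embI \<Omega> I)"
  proof (rule injI)
    fix r s assume "embI \<Omega> I r = embI \<Omega> I s"
    hence B: "big {L. constF \<Omega> r L = constF \<Omega> s L}" using coset_eq constF_carr by (simp add: emb_eq)
    show "r = s"
    proof (rule ccontr)
      assume "r \<noteq> s"
      hence "{L. constF \<Omega> r L = constF \<Omega> s L} \<inter> Pfin \<Omega> = {}" by (auto simp: constF_def onPfin_def)
      thus False using not_big B by blast
    qed
  qed
next
  fix r s :: real
  have "r \<le> s \<longleftrightarrow> big {L. constF \<Omega> r L \<le> constF \<Omega> s L}"
  proof
    assume "r \<le> s"
    hence "{L. constF \<Omega> r L \<le> constF \<Omega> s L} = UNIV" by (auto simp: constF_def onPfin_def)
    thus "big {L. constF \<Omega> r L \<le> constF \<Omega> s L}" using big_UNIV by simp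
  next
    assume B: "big {L. constF \<Omega> r L \<le> constF \<Omega> s L}"
    show "r \<le> s"
    proof (rule ccontr)
      assume "\<not> r \<le> s"
      hence "{L. constF \<Omega> r L \<le> constF \<Omega> s L} \<inter> Pfin \<Omega> = {}" by (auto simp: constF_def onPfin_def)
      thus False using not_big B by blast
    qed
  qed
  thus "r \<le> s \<longleftrightarrow> RI_le (embI \<Omega> I r) (embI \<Omega> I s)"
    using le_iff constF_carr by (simp add: emb_eq)
qed

end

lemma Pfin_iff: "L \<in> Pfin \<Omega> \<longleftrightarrow> finite L \<and> L \<subseteq> \<Omega>" by (simp add: Pfin_def)

locale napL = fineL +
  fixes w :: "'a \<Rightarrow> real"
  assumes inf: "infinite \<Omega>" and pos: "\<forall>\<omega>\<in>\<Omega>. w \<omega> > 0"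
begin

definition a where "a A = onPfin \<Omega> (\<lambda>L. \<Sum>\<omega>\<in>A \<inter> L. w \<omega>)"
definition t where "t = onPfin \<Omega> (\<lambda>L. if L = {} then 0 else 1 / (\<Sum>\<omega>\<in>L. w \<omega>))"
definition p where "p A = (\<lambda>L. a A L * t L)"

lemma a_carr: "a A \<in> carrier (FF \<Omega>)" by (simp add: a_def carrier_FF onPfin_def)
lemma t_carr: "t \<in> carrier (FF \<Omega>)" by (simp add: t_def carrier_FF onPfin_def)
lemma p_carr: "p A \<in> carrier (FF \<Omega>)" by (simp add: p_def a_def carrier_FF onPfin_def)

lemma sumw_pos: "L \<in> Pfin \<Omega> \<Longrightarrow> L \<noteq> {} \<Longrightarrow> (\<Sum>\<omega>\<in>L. w \<omega>) > 0"
  using pos by (intro sum_pos) (auto simp: Pfin_iff)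

lemma sumw_nonneg: "A \<subseteq> \<Omega> \<Longrightarrow> (\<Sum>\<omega>\<in>A \<inter> L. w \<omega>) \<ge> 0"
  using pos by (intro sum_nonneg) (auto intro: less_imp_le)

lemma p_Pfin: "L \<in> Pfin \<Omega> \<Longrightarrow> L \<noteq> {} \<Longrightarrow> p A L = (\<Sum>\<omega>\<in>A \<inter> L. w \<omega>) / (\<Sum>\<omega>\<in>L. w \<omega>)"
  by (simp add: p_def a_def t_def onPfin_def)

lemma big_in: "\<omega> \<in> \<Omega> \<Longrightarrow> big {L. \<omega> \<in> L}"
proof -
  assume o: "\<omega> \<in> \<Omega>"
  have "onPfin \<Omega> (\<lambda>L. 1 - chi L \<omega>) \<in> I" using fine o by (simp add: fine_ideal_def)
  moreover have "onPfin \<Omega> (\<lambda>L. 1 - chi L \<omega>) = onPfin \<Omega> (\<lambda>L. if L \<in> {L. \<omega> \<in> L} then 0 else 1)"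
    by (auto simp: fun_eq_iff onPfin_def chi_def)
  ultimately show ?thesis by (simp add: big_def)
qed

lemma big_ne: "big {L. L \<noteq> {}}"
proof -
  obtain \<omega> where "\<omega> \<in> \<Omega>" using inf by (metis ex_in_conv finite.emptyI)
  hence "big {L. \<omega> \<in> L}" by (rule big_in)
  thus ?thesis by (rule big_mono) auto
qed

lemma big_sup: "finite L0 \<Longrightarrow> L0 \<subseteq> \<Omega> \<Longrightarrow> big {L. L0 \<subseteq> L}"
proof (induction L0 rule: finite_induct)
  case empty
  then show ?case using big_UNIV by simp
next
  case (insert x F)
  hence "big ({L. x \<in> L} \<inter> {L. F \<subseteq> L})" using big_in by (intro big_Int) auto
  thus ?case by (rule big_mono) auto
qed

lemma sumI_eq: "sumI \<Omega> I A w = I +>\<^bsub>FF \<Omega>\<^esub> a A"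
  by (simp add: sumI_def JI_def a_def)

lemma inv_t: "inv\<^bsub>RI \<Omega> I\<^esub> (I +>\<^bsub>FF \<Omega>\<^esub> a \<Omega>) = I +>\<^bsub>FF \<Omega>\<^esub> t"
proof -
  interpret F: field "RI \<Omega> I" by (rule field_Q)
  have pc: "(\<lambda>L. a \<Omega> L * t L) \<in> carrier (FF \<Omega>)" using p_carr by (simp add: p_def)
  have "big {L. a \<Omega> L * t L = onPfin \<Omega> (\<lambda>_. 1) L}"
    by (rule big_mono[OF big_ne]) (auto simp: a_def t_def onPfin_def Pfin_iff Int_absorb1 dest!: sumw_pos)
  hence "(I +>\<^bsub>FF \<Omega>\<^esub> a \<Omega>) \<otimes>\<^bsub>RI \<Omega> I\<^esub> (I +>\<^bsub>FF \<Omega>\<^esub> t) = \<one>\<^bsub>RI \<Omega> I\<^esub>"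
    using mult_Q[OF a_carr t_carr] one_Q coset_eq[OF pc] by (simp add: onPfin_def carrier_FF)
  thus ?thesis using F.comm_inv_char in_Q a_carr t_carr by simp
qed

lemma PI_eq: "PI \<Omega> I w A = I +>\<^bsub>FF \<Omega>\<^esub> p A"
  by (simp add: PI_def sumI_eq inv_t mult_Q a_carr t_carr p_def)

lemma PI_carr: "PI \<Omega> I w A \<in> carrier (RI \<Omega> I)"
  by (simp add: PI_eq in_Q p_carr)


lemma div_Q: assumes X: "X \<in> carrier (RI \<Omega> I)" and Y: "Y \<in> carrier (RI \<Omega> I)" and Z: "Z \<in> carrier (RI \<Omega> I)"
  and Y0: "Y \<noteq> \<zero>\<^bsub>RI \<Omega> I\<^esub>" and E: "Z \<otimes>\<^bsub>RI \<Omega> I\<^esub> Y = X"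
  shows "X \<otimes>\<^bsub>RI \<Omega> I\<^esub> inv\<^bsub>RI \<Omega> I\<^esub> Y = Z"
proof -
  interpret F: field "RI \<Omega> I" by (rule field_Q)
  have U: "Y \<in> Units (RI \<Omega> I)" using Y Y0 F.field_Units by simp
  have "X \<otimes>\<^bsub>RI \<Omega> I\<^esub> inv\<^bsub>RI \<Omega> I\<^esub> Y = Z \<otimes>\<^bsub>RI \<Omega> I\<^esub> (Y \<otimes>\<^bsub>RI \<Omega> I\<^esub> inv\<^bsub>RI \<Omega> I\<^esub> Y)"
    using E[symmetric] U Y Z by (simp add: F.m_assoc)
  also have "\<dots> = Z" using U Z by simp
  finally show ?thesis .
qed

lemma cond_eq: assumes L: "L \<in> Pfin \<Omega>" "L \<noteq> {}"
  shows "PI \<Omega> I w (A \<inter> L) \<otimes>\<^bsub>RI \<Omega> I\<^esub> inv\<^bsub>RI \<Omega> I\<^esub> (PI \<Omega> I w L)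
     = embI \<Omega> I ((\<Sum>\<omega>\<in>A \<inter> L. w \<omega>) / (\<Sum>\<omega>\<in>L. w \<omega>))"
proof (rule div_Q)
  define r where "r = (\<Sum>\<omega>\<in>A \<inter> L. w \<omega>) / (\<Sum>\<omega>\<in>L. w \<omega>)"
  have SL: "(\<Sum>\<omega>\<in>L. w \<omega>) > 0" using sumw_pos[OF L] .
  have fin: "finite L" "L \<subseteq> \<Omega>" using L by (auto simp: Pfin_iff)
  have z: "(\<lambda>L. 0::real) \<in> carrier (FF \<Omega>)" by (simp add: carrier_FF)
  show "PI \<Omega> I w (A \<inter> L) \<in> carrier (RI \<Omega> I)" "PI \<Omega> I w L \<in> carrier (RI \<Omega> I)" by (rule PI_carr)+
  show "embI \<Omega> I r \<in> carrier (RI \<Omega> I)" by (simp add: emb_eq in_Q constF_carr)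
  show "PI \<Omega> I w L \<noteq> \<zero>\<^bsub>RI \<Omega> I\<^esub>"
  proof
    assume "PI \<Omega> I w L = \<zero>\<^bsub>RI \<Omega> I\<^esub>"
    hence "big {M. p L M = 0}" using coset_eq[OF p_carr z] by (simp add: PI_eq zero_Q)
    hence "big ({M. L \<subseteq> M} \<inter> {M. p L M = 0})" using big_sup[OF fin] by (intro big_Int)
    moreover have "({M. L \<subseteq> M} \<inter> {M. p L M = 0}) \<inter> Pfin \<Omega> = {}"
    proof -
      have "p L M \<noteq> 0" if "M \<in> Pfin \<Omega>" "L \<subseteq> M" for M
      proof -
        have "M \<noteq> {}" using that L by auto
        hence "p L M = (\<Sum>\<omega>\<in>L. w \<omega>) / (\<Sum>\<omega>\<in>M. w \<omega>)" using p_Pfin[OF that(1)] that(2)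
          by (simp add: Int_absorb2)
        moreover have "(\<Sum>\<omega>\<in>M. w \<omega>) > 0" using sumw_pos[OF that(1) \<open>M \<noteq> {}\<close>] .
        ultimately show ?thesis using SL by simp
      qed
      thus ?thesis by auto
    qed
    ultimately show False using not_big by blast
  qed
  have ce: "(\<lambda>M. constF \<Omega> r M * p L M) \<in> carrier (FF \<Omega>)" using p_carr constF_carr by (simp add: carrier_FF)
  have "big {M. constF \<Omega> r M * p L M = p (A \<inter> L) M}"
  proof (rule big_mono[OF big_sup[OF fin]], clarify)
    fix M assume M: "L \<subseteq> M" "M \<in> Pfin \<Omega>"
    have "M \<noteq> {}" using M L by auto
    have 1: "p L M = (\<Sum>\<omega>\<in>L. w \<omega>) / (\<Sum>\<omega>\<in>M. w \<omega>)" using p_Pfin[OF M(2) \<open>M \<noteq> {}\<close>] M(1)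
      by (simp add: Int_absorb2)
    have 2: "p (A \<inter> L) M = (\<Sum>\<omega>\<in>A \<inter> L. w \<omega>) / (\<Sum>\<omega>\<in>M. w \<omega>)" using p_Pfin[OF M(2) \<open>M \<noteq> {}\<close>] M(1)
      by (simp add: Int_absorb2 Int_assoc)
    show "constF \<Omega> r M * p L M = p (A \<inter> L) M"
      using M(2) SL by (simp add: 1 2 constF_def onPfin_def r_def)
  qed
  thus "embI \<Omega> I r \<otimes>\<^bsub>RI \<Omega> I\<^esub> PI \<Omega> I w L = PI \<Omega> I w (A \<inter> L)"
    using coset_eq[OF ce p_carr] by (simp add: emb_eq PI_eq mult_Q constF_carr p_carr)
qed

lemma emb_inj: "embI \<Omega> I r = embI \<Omega> I s \<Longrightarrow> r = s"
proof -
  have "inj (embI \<Omega> I)" using superreal by (simp add: superreal_field_def)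
  thus "embI \<Omega> I r = embI \<Omega> I s \<Longrightarrow> r = s" by (rule injD)
qed

lemma NAP: "NAP_space \<Omega> (RI \<Omega> I) RI_le (embI \<Omega> I) (PI \<Omega> I w) (JI \<Omega> I)"
  unfolding NAP_space_def
proof (intro conjI allI impI ballI)
  have "JI \<Omega> I = a_r_coset (FF \<Omega>) I" by (simp add: fun_eq_iff JI_def)
  thus "JI \<Omega> I \<in> ring_hom (FF \<Omega>) (RI \<Omega> I)"
    using ideal.rcos_ring_hom[OF idI] by (simp add: RI_def)
next
  fix r and \<phi> :: "'a set \<Rightarrow> real" assume ph: "\<phi> \<in> carrier (FF \<Omega>)"
  have "scaleF r \<phi> = (\<lambda>L. constF \<Omega> r L * \<phi> L)"
    using ph by (auto simp: fun_eq_iff scaleF_def constF_def onPfin_def carrier_FF)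
  thus "JI \<Omega> I (scaleF r \<phi>) = embI \<Omega> I r \<otimes>\<^bsub>RI \<Omega> I\<^esub> JI \<Omega> I \<phi>"
    using ph by (simp add: JI_def emb_eq mult_Q constF_carr)
next
  show "superreal_field (RI \<Omega> I) RI_le (embI \<Omega> I)" by (rule superreal)
next
  fix A show "PI \<Omega> I w A \<in> carrier (RI \<Omega> I)" by (rule PI_carr)
next
  fix A assume A: "A \<subseteq> \<Omega>"
  have z: "(\<lambda>L. 0::real) \<in> carrier (FF \<Omega>)" by (simp add: carrier_FF)
  have "0 \<le> p A L" for L
  proof (cases "L \<in> Pfin \<Omega> \<and> L \<noteq> {}")
    case True thus ?thesis using p_Pfin[of L A] sumw_pos[of L] sumw_nonneg[OF A, of L] by simp
  next
    case False thus ?thesis by (auto simp: p_def a_def t_def onPfin_def)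
  qed
  hence "big {L. 0 \<le> p A L}" using big_UNIV by simp
  thus "RI_le \<zero>\<^bsub>RI \<Omega> I\<^esub> (PI \<Omega> I w A)" using le_iff[OF z p_carr] by (simp add: zero_Q PI_eq)
next
  fix A assume A: "A \<subseteq> \<Omega>"
  have oc: "onPfin \<Omega> (\<lambda>_. 1::real) \<in> carrier (FF \<Omega>)" by (simp add: carrier_FF onPfin_def)
  have eq: "PI \<Omega> I w A = \<one>\<^bsub>RI \<Omega> I\<^esub> \<longleftrightarrow> big {L. p A L = onPfin \<Omega> (\<lambda>_. 1) L}"
    using coset_eq[OF p_carr oc] by (simp add: PI_eq one_Q)
  show "PI \<Omega> I w A = \<one>\<^bsub>RI \<Omega> I\<^esub> \<longleftrightarrow> A = \<Omega>"
  proof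
    assume "A = \<Omega>"
    have "big {L. p A L = onPfin \<Omega> (\<lambda>_. 1) L}"
    proof (rule big_mono[OF big_ne], clarify)
      fix L assume L: "L \<noteq> {}" "L \<in> Pfin \<Omega>"
      have "\<Omega> \<inter> L = L" using L by (auto simp: Pfin_iff)
      thus "p A L = onPfin \<Omega> (\<lambda>_. 1) L"
        using p_Pfin[OF L(2) L(1)] sumw_pos[OF L(2) L(1)] L \<open>A = \<Omega>\<close> by (simp add: onPfin_def)
    qed
    thus "PI \<Omega> I w A = \<one>\<^bsub>RI \<Omega> I\<^esub>" using eq by simp
  next
    assume "PI \<Omega> I w A = \<one>\<^bsub>RI \<Omega> I\<^esub>"
    hence B: "big {L. p A L = onPfin \<Omega> (\<lambda>_. 1) L}" using eq by simp
    show "A = \<Omega>"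
    proof (rule ccontr)
      assume "A \<noteq> \<Omega>"
      then obtain \<omega>1 where o1: "\<omega>1 \<in> \<Omega>" "\<omega>1 \<notin> A" using A by auto
      have "big ({L. \<omega>1 \<in> L} \<inter> {L. p A L = onPfin \<Omega> (\<lambda>_. 1) L})" using big_in[OF o1(1)] B by (rule big_Int)
      moreover have "({L. \<omega>1 \<in> L} \<inter> {L. p A L = onPfin \<Omega> (\<lambda>_. 1) L}) \<inter> Pfin \<Omega> = {}"
      proof -
        have "p A L \<noteq> 1" if L: "L \<in> Pfin \<Omega>" "\<omega>1 \<in> L" for L
        proof -
          have ne: "L \<noteq> {}" using L by auto
          have fin: "finite L" using L by (simp add: Pfin_iff)
          have "(\<Sum>\<omega>\<in>L. w \<omega>) = (\<Sum>\<omega>\<in>L \<inter> A. w \<omega>) + (\<Sum>\<omega>\<in>L - A. w \<omega>)"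
            using fin by (rule sum.Int_Diff)
          moreover have "(\<Sum>\<omega>\<in>L - A. w \<omega>) > 0"
            using fin L o1 pos by (intro sum_pos) (auto simp: Pfin_iff)
          ultimately have "(\<Sum>\<omega>\<in>A \<inter> L. w \<omega>) < (\<Sum>\<omega>\<in>L. w \<omega>)" by (simp add: Int_commute)
          thus ?thesis using p_Pfin[OF L(1) ne] sumw_pos[OF L(1) ne] by simp
        qed
        thus ?thesis by (auto simp: onPfin_def)
      qed
      ultimately show False using not_big by blast
    qed
  qed
next
  fix A B assume A: "A \<subseteq> \<Omega>" and B: "B \<subseteq> \<Omega>" and AB: "A \<inter> B = {}"
  have "p (A \<union> B) = (\<lambda>L. p A L + p B L)"
  proof
    fix L show "p (A \<union> B) L = p A L + p B L"
    proof (cases "L \<in> Pfin \<Omega>")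
      case True
      hence fin: "finite L" by (simp add: Pfin_iff)
      have "(A \<union> B) \<inter> L = (A \<inter> L) \<union> (B \<inter> L)" by auto
      hence "(\<Sum>\<omega>\<in>(A \<union> B) \<inter> L. w \<omega>) = (\<Sum>\<omega>\<in>A \<inter> L. w \<omega>) + (\<Sum>\<omega>\<in>B \<inter> L. w \<omega>)"
        using fin AB by (simp add: sum.union_disjoint disjoint_iff)
      thus ?thesis using True by (simp add: p_def a_def onPfin_def distrib_right)
    qed (simp add: p_def a_def onPfin_def)
  qed
  thus "PI \<Omega> I w (A \<union> B) = PI \<Omega> I w A \<oplus>\<^bsub>RI \<Omega> I\<^esub> PI \<Omega> I w B"
    by (simp add: PI_eq add_Q p_carr)
next
  fix A L assume "A \<subseteq> \<Omega>" "L \<in> Pfin \<Omega>" "L \<noteq> {}"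
  thus "\<exists>r. embI \<Omega> I r = PI \<Omega> I w (A \<inter> L) \<otimes>\<^bsub>RI \<Omega> I\<^esub> inv\<^bsub>RI \<Omega> I\<^esub> PI \<Omega> I w L"
    using cond_eq by metis
next
  fix A and \<phi> :: "'a set \<Rightarrow> real"
  assume A: "A \<subseteq> \<Omega>" and ph: "\<phi> \<in> carrier (FF \<Omega>)"
    and H: "\<forall>L\<in>Pfin \<Omega>. L \<noteq> {} \<longrightarrow> embI \<Omega> I (\<phi> L) = PI \<Omega> I w (A \<inter> L) \<otimes>\<^bsub>RI \<Omega> I\<^esub> inv\<^bsub>RI \<Omega> I\<^esub> PI \<Omega> I w L"
  have "big {L. p A L = \<phi> L}"
  proof (rule big_mono[OF big_ne], clarify)
    fix L assume L: "L \<noteq> {}" "L \<in> Pfin \<Omega>"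
    have "\<phi> L = (\<Sum>\<omega>\<in>A \<inter> L. w \<omega>) / (\<Sum>\<omega>\<in>L. w \<omega>)"
      using H L cond_eq[OF L(2) L(1), of A] by (intro emb_inj) simp
    thus "p A L = \<phi> L" using p_Pfin[OF L(2) L(1)] by simp
  qed
  thus "PI \<Omega> I w A = JI \<Omega> I \<phi>" using coset_eq[OF p_carr ph] by (simp add: PI_eq JI_def)
qed

end


theorem mainTheorem8:
  fixes \<Omega> :: "'a set" and w :: "'a \<Rightarrow> real" and I :: "('a set \<Rightarrow> real) set"
  assumes "infinite \<Omega>"
    and "\<forall>\<omega>\<in>\<Omega>. w \<omega> > 0"
    and "fine_ideal \<Omega> I"
  shows "superreal_field (RI \<Omega> I) RI_le (embI \<Omega> I)
       \<and> NAP_space \<Omega> (RI \<Omega> I) RI_le (embI \<Omega> I) (PI \<Omega> I w) (JI \<Omega> I)"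
proof -
  interpret napL \<Omega> I w
    using assms by (simp add: napL_def napL_axioms_def fineL_def)
  show ?thesis using superreal NAP by simp
qed

end
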